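(* Let $p>1$ be an integer, let $d_1,\dots,d_p\in(0,\tfrac12)$, and let $(\varepsilon_t)_{t\in\mathbb{Z}}$ be a zero-mean white noise (pairwise uncorrelated, $E\varepsilon_t=0$) with finite variances $\sigma_t^2$ satisfying $\sigma_{t+p}^2=\sigma_t^2$. Write each $t\in\mathbb{Z}$ uniquely as $t=i+pm$ with $i\in\{1,\dots,p\}$, $m\in\mathbb{Z}$, and define the process $X_{i+pm}=\sum_{j=0}^{\infty}\psi_j^i\varepsilon_{i+pm-j}$ (limit in $L^2$), where $\psi_j^i=\frac{\Gamma(j+d_i)}{\Gamma(j+1)\Gamma(d_i)}$. Let $\pi_j^i=\frac{\Gamma(j-d_i)}{\Gamma(j+1)\Gamma(-d_i)}$. Then for every $i\in\{1,\dots,p\}$ and $m\in\mathbb{Z}$, the series $\sum_{j=0}^{\infty}\pi_j^iX_{i+pm-j}$ converges in quadratic mean.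
   Context: $(X_t)$ is the periodic fractionally integrated process PtvARFIMA$_p(0,d_t,0)$, i.e. the causal solution of $(1-B)^{d_i}X_{i+pm}=\varepsilon_{i+pm}$ with $B$ the backshift operator; the series $\sum_j\pi_j^iX_{i+pm-j}$ is the infinite autoregressive representation $(1-B)^{d_i}X_{i+pm}$. *)

theory Defs
  imports "HOL-Probability.Probability"
begin

(* psi_j^i = Gamma(j+d)/(Gamma(j+1) Gamma(d)),  MA(infinity) coefficients of (1-B)^(-d) *)
definition psi_coef :: "real \<Rightarrow> nat \<Rightarrow> real" where
  "psi_coef d j = Gamma (real j + d) / (Gamma (real j + 1) * Gamma d)"

(* pi_j^i = Gamma(j-d)/(Gamma(j+1) Gamma(-d)),  AR(infinity) coefficients of (1-B)^d *)
definition pi_coef :: "real \<Rightarrow> nat \<Rightarrow> real" where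
  "pi_coef d j = Gamma (real j - d) / (Gamma (real j + 1) * Gamma (- d))"

definition conv_qm :: "'a measure \<Rightarrow> (nat \<Rightarrow> 'a \<Rightarrow> real) \<Rightarrow> bool" where
  "conv_qm M S \<longleftrightarrow> (\<exists>Y. Y \<in> borel_measurable M \<and> integrable M (\<lambda>\<omega>. (Y \<omega>)\<^sup>2) \<and>
      ((\<lambda>n. \<integral>\<omega>. (S n \<omega> - Y \<omega>)\<^sup>2 \<partial>M) \<longlonglongrightarrow> 0))"

end

theory Submission
  imports Defs
begin


lemma Gamma_neg_d:
  fixes d :: real assumes "0 < d" "d < 1"
  shows "Gamma (- d) = - Gamma (1 - d) / d" "Gamma (-d) < 0"
proof -
  have ni: "- d \<notin> \<int>\<^sub>\<le>\<^sub>0"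
  proof
    assume "- d \<in> \<int>\<^sub>\<le>\<^sub>0"
    then obtain k :: int where k: "- d = of_int k" by (rule nonpos_Ints_cases) blast
    have "(-1::real) < of_int k" "of_int k < (0::real)" using assms unfolding k[symmetric] by linarith+
    then have "-1 < k" "k < 0" by simp_all
    then show False by linarith
  qed
  have "Gamma (- d + 1) = (- d) * Gamma (- d)" by (rule Gamma_plus1[OF ni])
  then have e: "Gamma (1 - d) = (- d) * Gamma (- d)" by (simp add: add.commute)
  then show "Gamma (- d) = - Gamma (1 - d) / d" using assms by (simp add: field_simps)
  moreover have "Gamma (1 - d) > 0" using assms by simp
  ultimately show "Gamma (-d) < 0" using assms by (simp add: divide_neg_pos)
qed

lemma frac_step: "\<lbrakk>A > 0; Bn > 0; C > 0; (n::real) \<ge> 0; d > 0\<rbrakk> \<Longrightarrow>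
  A/(Bn*C) + A/(((n+1)*Bn) * (-C/d)) = ((n+1-d)*A)/(((n+1)*Bn)*C)"
proof -
  assume h: "A > 0" "Bn > 0" "C > 0" "(n::real) \<ge> 0" "d > 0"
  have "A/(((n+1)*Bn) * (-C/d)) = - (d*A)/(((n+1)*Bn)*C)" using h by (simp add: field_simps)
  moreover have "A/(Bn*C) = ((n+1)*A)/(((n+1)*Bn)*C)" using h by simp
  ultimately show ?thesis by (simp add: diff_divide_distrib[symmetric] add_divide_distrib[symmetric] algebra_simps)
qed

lemma pi_partial:
  fixes d :: real assumes "0 < d" "d < 1"
  shows "(\<Sum>j<Suc n. pi_coef d j) = Gamma (real n + 1 - d) / (Gamma (real n + 1) * Gamma (1 - d))"
proof (induction n)
  case 0
  have "Gamma (-d) \<noteq> 0" using Gamma_neg_d(2)[OF assms] by linarith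
  moreover have "Gamma (1-d) > 0" using assms by simp
  ultimately show ?case by (simp add: pi_coef_def)
next
  case (Suc n)
  have g1: "Gamma (real n + 1 - d + 1) = (real n + 1 - d) * Gamma (real n + 1 - d)"
    using assms by (intro Gamma_plus1) (auto elim!: nonpos_Ints_cases)
  have g2: "Gamma (real n + 1 + 1) = (real n + 1) * Gamma (real n + 1)"
    by (intro Gamma_plus1) (auto elim!: nonpos_Ints_cases)
  have pos1: "Gamma (real n + 1) > 0" by simp
  have pos2: "Gamma (1 - d) > 0" using assms by simp
  have G: "Gamma (-d) = - Gamma (1 - d) / d" using Gamma_neg_d[OF assms] by simp
  have "(\<Sum>j<Suc (Suc n). pi_coef d j) = Gamma (real n + 1 - d) / (Gamma (real n + 1) * Gamma (1 - d))
      + Gamma (real (Suc n) - d) / (Gamma (real (Suc n) + 1) * Gamma (- d))"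
    using Suc by (simp add: pi_coef_def)
  also have "\<dots> = Gamma (real (Suc n) + 1 - d) / (Gamma (real (Suc n) + 1) * Gamma (1 - d))"
  proof -
    have a: "real (Suc n) - d = real n + 1 - d" by simp
    have b: "real (Suc n) + 1 - d = real n + 1 - d + 1" by simp
    have c: "real (Suc n) + 1 = real n + 1 + 1" by simp
    have e2: "Gamma (real (Suc n) + 1 - d) = (real n + 1 - d) * Gamma (real n + 1 - d)"
      by (subst b) (rule g1)
    have e3: "Gamma (real (Suc n) + 1) = (real n + 1) * Gamma (real n + 1)"
      by (subst c) (rule g2)
    have pos3: "Gamma (real n + 1 - d) > 0" using assms by simp
    show ?thesis unfolding a e2 e3 G
      by (rule frac_step[OF pos3 pos1 pos2 _ assms(1)]) simp
  qed
  finally show ?case .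
qed

lemma pi_summable:
  fixes d :: real assumes "0 < d" "d < 1"
  shows "summable (\<lambda>j. \<bar>pi_coef d j\<bar>)"
proof (rule summableI_nonneg_bounded[where x = 2])
  fix n
  show "(\<Sum>j<n. \<bar>pi_coef d j\<bar>) \<le> 2"
  proof (cases n)
    case 0 then show ?thesis by simp
  next
    case (Suc k)
    have neg: "pi_coef d j \<le> 0" if "j \<ge> 1" for j
    proof -
      have "Gamma (real j - d) > 0" using that assms by simp
      moreover have "Gamma (real j + 1) > 0" by simp
      moreover have "Gamma (-d) < 0" using Gamma_neg_d(2)[OF assms] .
      ultimately have "Gamma (real j - d) / (Gamma (real j + 1) * Gamma (- d)) < 0"
        by (intro divide_pos_neg mult_pos_neg)
      then show ?thesis unfolding pi_coef_def by (rule less_imp_le)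
    qed
    have "Gamma (-d) \<noteq> 0" using Gamma_neg_d(2)[OF assms] by linarith
    then have p0: "pi_coef d 0 = 1" by (simp add: pi_coef_def)
    have "(\<Sum>j<Suc k. \<bar>pi_coef d j\<bar>) = 2 * pi_coef d 0 - (\<Sum>j<Suc k. pi_coef d j)"
    proof -
      have "(\<Sum>j<Suc k. \<bar>pi_coef d j\<bar>) = \<bar>pi_coef d 0\<bar> + (\<Sum>j<k. \<bar>pi_coef d (Suc j)\<bar>)"
        by (rule sum.lessThan_Suc_shift)
      also have "\<dots> = pi_coef d 0 - (\<Sum>j<k. pi_coef d (Suc j))"
      proof -
        have "(\<Sum>j<k. \<bar>pi_coef d (Suc j)\<bar>) = (\<Sum>j<k. - pi_coef d (Suc j))"
          by (intro sum.cong refl) (simp add: abs_of_nonpos neg)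
        then show ?thesis using p0 by (simp add: sum_negf)
      qed
      also have "\<dots> = 2 * pi_coef d 0 - (\<Sum>j<Suc k. pi_coef d j)"
        unfolding sum.lessThan_Suc_shift using p0 by simp
      finally show ?thesis .
    qed
    also have "\<dots> \<le> 2"
    proof -
      have "0 < Gamma (real k + 1 - d) / (Gamma (real k + 1) * Gamma (1 - d))"
        using assms by (intro divide_pos_pos mult_pos_pos Gamma_real_pos) auto
      then show ?thesis unfolding pi_partial[OF assms, of k] p0 by linarith
    qed
    finally show ?thesis unfolding Suc .
  qed
qed (rule abs_ge_zero)



lemma abs_le_1_sq: "\<bar>y::real\<bar> \<le> 1 + y\<^sup>2"
proof (cases "\<bar>y\<bar> \<le> 1")
  case True
  have "0 \<le> y\<^sup>2" by simp
  with True show ?thesis by linarith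
next
  case False
  then have "\<bar>y\<bar> * 1 \<le> \<bar>y\<bar> * \<bar>y\<bar>" by (intro mult_left_mono) auto
  then show ?thesis by (simp add: power2_eq_square abs_mult_self_eq)
qed

lemma CS_abs:
  fixes c x :: "nat \<Rightarrow> real"
  shows "(\<Sum>i\<in>I. c i * x i)\<^sup>2 \<le> (\<Sum>i\<in>I. \<bar>c i\<bar>) * (\<Sum>i\<in>I. \<bar>c i\<bar> * (x i)\<^sup>2)"
proof -
  have "(\<Sum>i\<in>I. sqrt \<bar>c i\<bar> * (sgn (c i) * sqrt \<bar>c i\<bar> * x i))\<^sup>2
     \<le> (\<Sum>i\<in>I. (sqrt \<bar>c i\<bar>)\<^sup>2) * (\<Sum>i\<in>I. (sgn (c i) * sqrt \<bar>c i\<bar> * x i)\<^sup>2)"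
    by (rule Cauchy_Schwarz_ineq_sum)
  moreover have "\<And>i. sqrt \<bar>c i\<bar> * (sgn (c i) * sqrt \<bar>c i\<bar> * x i) = c i * x i"
  proof -
    fix i
    have "sqrt \<bar>c i\<bar> * (sgn (c i) * sqrt \<bar>c i\<bar> * x i) = sgn (c i) * (sqrt \<bar>c i\<bar> * sqrt \<bar>c i\<bar>) * x i"
      by (simp add: algebra_simps)
    also have "\<dots> = c i * x i" by (simp add: sgn_mult_abs)
    finally show "sqrt \<bar>c i\<bar> * (sgn (c i) * sqrt \<bar>c i\<bar> * x i) = c i * x i" .
  qed
  moreover have "\<And>i. (sgn (c i) * sqrt \<bar>c i\<bar> * x i)\<^sup>2 = \<bar>c i\<bar> * (x i)\<^sup>2"
    by (simp add: power_mult_distrib abs_sgn_eq power2_eq_square[of "sgn _"] sgn_mult_self_eq) 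
  ultimately show ?thesis by simp
qed



lemma series_qm:
  fixes M :: "'a measure" and x :: "nat \<Rightarrow> 'a \<Rightarrow> real" and c :: "nat \<Rightarrow> real" and B :: real
  assumes meas[measurable]: "\<And>j. x j \<in> borel_measurable M"
    and L2: "\<And>j. integrable M (\<lambda>\<omega>. (x j \<omega>)\<^sup>2)"
    and bnd: "\<And>j. (\<integral>\<omega>. (x j \<omega>)\<^sup>2 \<partial>M) \<le> B"
    and summ: "summable (\<lambda>j. \<bar>c j\<bar>)"
  shows "conv_qm M (\<lambda>n \<omega>. \<Sum>j<n. c j * x j \<omega>)"
proof -
  define S where "S n \<omega> = (\<Sum>j<n. c j * x j \<omega>)" for n \<omega>
  define Y where "Y \<omega> = lim (\<lambda>n. S n \<omega>)" for \<omega>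
  define T where "T n = (\<Sum>k. \<bar>c (k + n)\<bar>)" for n
  define W where "W n \<omega> = (\<Sum>k. ennreal (\<bar>c (k + n)\<bar> * (x (k + n) \<omega>)\<^sup>2))" for n \<omega>
  have Smeas[measurable]: "S n \<in> borel_measurable M" for n unfolding S_def by measurable
  have Ymeas[measurable]: "Y \<in> borel_measurable M" unfolding Y_def by measurable
  have Wmeas[measurable]: "W n \<in> borel_measurable M" for n unfolding W_def by measurable
  have "0 \<le> (\<integral>\<omega>. (x 0 \<omega>)\<^sup>2 \<partial>M)" by (rule integral_nonneg_AE) auto
  with bnd[of 0] have B0: "0 \<le> B" by linarith
  have summT: "summable (\<lambda>k. \<bar>c (k + n)\<bar>)" for n using summable_iff_shift[of "\<lambda>j. \<bar>c j\<bar>" n] summ by simp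
  have T0: "0 \<le> T n" for n unfolding T_def using summT by (simp add: suminf_nonneg)
  have intW: "(\<integral>\<^sup>+\<omega>. W n \<omega> \<partial>M) \<le> ennreal (T n * B)" for n
  proof -
    have "(\<integral>\<^sup>+\<omega>. W n \<omega> \<partial>M) = (\<Sum>k. \<integral>\<^sup>+\<omega>. ennreal (\<bar>c (k + n)\<bar> * (x (k + n) \<omega>)\<^sup>2) \<partial>M)"
      unfolding W_def by (rule nn_integral_suminf) measurable
    also have "\<dots> = (\<Sum>k. ennreal (\<bar>c (k + n)\<bar> * (\<integral>\<omega>. (x (k + n) \<omega>)\<^sup>2 \<partial>M)))"
    proof (intro suminf_cong)
      fix k
      have "integrable M (\<lambda>\<omega>. \<bar>c (k + n)\<bar> * (x (k + n) \<omega>)\<^sup>2)" using L2 by simp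
      then show "(\<integral>\<^sup>+\<omega>. ennreal (\<bar>c (k + n)\<bar> * (x (k + n) \<omega>)\<^sup>2) \<partial>M)
          = ennreal (\<bar>c (k + n)\<bar> * (\<integral>\<omega>. (x (k + n) \<omega>)\<^sup>2 \<partial>M))"
        by (subst nn_integral_eq_integral) auto
    qed
    also have "\<dots> \<le> (\<Sum>k. ennreal (\<bar>c (k + n)\<bar> * B))"
      by (intro suminf_le) (auto intro!: ennreal_leI mult_left_mono bnd)
    also have "\<dots> = ennreal (\<Sum>k. \<bar>c (k + n)\<bar> * B)"
      using summT B0 by (intro suminf_ennreal2) (auto intro: summable_mult2)
    also have "\<dots> = ennreal (T n * B)" unfolding T_def using summT by (simp add: suminf_mult2)
    finally show ?thesis .
  qed
  have AEfin: "AE \<omega> in M. W 0 \<omega> \<noteq> \<infinity>"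
    using intW[of 0] by (intro nn_integral_PInf_AE) (auto simp: top_unique)
  have point: "ennreal ((S n \<omega> - Y \<omega>)\<^sup>2) \<le> ennreal (T n) * W n \<omega>"
    if fin: "W 0 \<omega> \<noteq> \<infinity>" for n \<omega>
  proof -
    let ?a = "\<lambda>j. \<bar>c j\<bar> * (x j \<omega>)\<^sup>2"
    have sa: "summable ?a"
      using fin unfolding W_def by (intro summable_suminf_not_top) auto
    have sb: "summable (\<lambda>j. c j * x j \<omega>)"
    proof (rule summable_comparison_test)
      show "\<exists>N. \<forall>j\<ge>N. norm (c j * x j \<omega>) \<le> \<bar>c j\<bar> + ?a j"
      proof (intro exI allI impI)
        fix j :: nat
        have "\<bar>x j \<omega>\<bar> \<le> 1 + (x j \<omega>)\<^sup>2" by (rule abs_le_1_sq)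
        then have "\<bar>c j\<bar> * \<bar>x j \<omega>\<bar> \<le> \<bar>c j\<bar> * (1 + (x j \<omega>)\<^sup>2)" by (simp add: mult_left_mono)
        then show "norm (c j * x j \<omega>) \<le> \<bar>c j\<bar> + ?a j" by (simp add: abs_mult algebra_simps)
      qed
      show "summable (\<lambda>j. \<bar>c j\<bar> + ?a j)" using summ sa by (rule summable_add)
    qed
    have "(\<lambda>m. S m \<omega>) \<longlonglongrightarrow> (\<Sum>j. c j * x j \<omega>)"
      unfolding S_def using sb by (rule summable_LIMSEQ)
    then have Yeq: "Y \<omega> = (\<Sum>j. c j * x j \<omega>)" unfolding Y_def by (rule limI)
    have diff: "Y \<omega> - S n \<omega> = (\<Sum>k. c (k + n) * x (k + n) \<omega>)"
      unfolding Yeq S_def using suminf_minus_initial_segment[OF sb, of n] by simp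
    have sbn: "summable (\<lambda>k. c (k + n) * x (k + n) \<omega>)" using summable_iff_shift[of "\<lambda>j. c j * x j \<omega>" n] sb by simp
    have san: "summable (\<lambda>k. ?a (k + n))" using summable_iff_shift[of ?a n] sa by simp
    have Weq: "W n \<omega> = ennreal (\<Sum>k. ?a (k + n))"
      unfolding W_def using san by (intro suminf_ennreal2) auto
    have lim2: "(\<lambda>N. (\<Sum>k<N. c (k + n) * x (k + n) \<omega>)\<^sup>2) \<longlonglongrightarrow> (Y \<omega> - S n \<omega>)\<^sup>2"
      unfolding diff using summable_LIMSEQ[OF sbn] by (intro tendsto_power)
    have "(Y \<omega> - S n \<omega>)\<^sup>2 \<le> T n * (\<Sum>k. ?a (k + n))"
    proof (rule LIMSEQ_le_const2[OF lim2], intro exI allI impI)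
      fix N :: nat
      have "(\<Sum>k<N. c (k + n) * x (k + n) \<omega>)\<^sup>2
          \<le> (\<Sum>k<N. \<bar>c (k + n)\<bar>) * (\<Sum>k<N. \<bar>c (k + n)\<bar> * (x (k + n) \<omega>)\<^sup>2)"
        by (rule CS_abs)
      also have "\<dots> \<le> T n * (\<Sum>k. ?a (k + n))"
        unfolding T_def
        by (intro mult_mono sum_le_suminf summT san) (auto intro: sum_nonneg suminf_nonneg summT)
      finally show "(\<Sum>k<N. c (k + n) * x (k + n) \<omega>)\<^sup>2 \<le> T n * (\<Sum>k. ?a (k + n))" .
    qed
    then have "(S n \<omega> - Y \<omega>)\<^sup>2 \<le> T n * (\<Sum>k. ?a (k + n))" by (simp add: power2_commute)
    then show ?thesis unfolding Weq using T0
      by (simp add: ennreal_mult[symmetric] suminf_nonneg san ennreal_leI)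
  qed
  have intD: "(\<integral>\<^sup>+\<omega>. ennreal ((S n \<omega> - Y \<omega>)\<^sup>2) \<partial>M) \<le> ennreal (T n * T n * B)" for n
  proof -
    have "(\<integral>\<^sup>+\<omega>. ennreal ((S n \<omega> - Y \<omega>)\<^sup>2) \<partial>M) \<le> (\<integral>\<^sup>+\<omega>. ennreal (T n) * W n \<omega> \<partial>M)"
      using AEfin by (intro nn_integral_mono_AE) (auto elim!: AE_mp intro!: point)
    also have "\<dots> = ennreal (T n) * (\<integral>\<^sup>+\<omega>. W n \<omega> \<partial>M)" by (rule nn_integral_cmult) measurable
    also have "\<dots> \<le> ennreal (T n) * ennreal (T n * B)" by (intro mult_left_mono intW) auto
    also have "\<dots> = ennreal (T n * T n * B)" using T0 B0 by (simp add: ennreal_mult[symmetric] mult.assoc)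
    finally show ?thesis .
  qed
  have integD: "integrable M (\<lambda>\<omega>. (S n \<omega> - Y \<omega>)\<^sup>2)" for n
    by (rule integrableI_bounded) (use intD[of n] in \<open>auto simp: order_le_less_trans\<close>)
  have realD: "(\<integral>\<omega>. (S n \<omega> - Y \<omega>)\<^sup>2 \<partial>M) \<le> T n * T n * B" for n
  proof -
    have "ennreal (\<integral>\<omega>. (S n \<omega> - Y \<omega>)\<^sup>2 \<partial>M) = (\<integral>\<^sup>+\<omega>. ennreal ((S n \<omega> - Y \<omega>)\<^sup>2) \<partial>M)"
      using integD[of n] by (subst nn_integral_eq_integral) auto
    then have "ennreal (\<integral>\<omega>. (S n \<omega> - Y \<omega>)\<^sup>2 \<partial>M) \<le> ennreal (T n * T n * B)" using intD[of n] by simp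
    then show ?thesis using T0 B0 by (subst (asm) ennreal_le_iff) auto
  qed
  have Tlim: "T \<longlonglongrightarrow> 0"
  proof -
    have "T = (\<lambda>n. (\<Sum>j. \<bar>c j\<bar>) - (\<Sum>j<n. \<bar>c j\<bar>))"
      unfolding T_def using suminf_minus_initial_segment[OF summ] by auto
    moreover have "(\<lambda>n. (\<Sum>j. \<bar>c j\<bar>) - (\<Sum>j<n. \<bar>c j\<bar>)) \<longlonglongrightarrow> (\<Sum>j. \<bar>c j\<bar>) - (\<Sum>j. \<bar>c j\<bar>)"
      by (intro tendsto_diff tendsto_const summable_LIMSEQ summ)
    ultimately show ?thesis by simp
  qed
  have lim: "(\<lambda>n. \<integral>\<omega>. (S n \<omega> - Y \<omega>)\<^sup>2 \<partial>M) \<longlonglongrightarrow> 0"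
  proof (rule real_tendsto_sandwich[of "\<lambda>_. 0" _ _ "\<lambda>n. T n * T n * B"])
    show "\<forall>\<^sub>F n in sequentially. 0 \<le> (\<integral>\<omega>. (S n \<omega> - Y \<omega>)\<^sup>2 \<partial>M)" by auto
    show "\<forall>\<^sub>F n in sequentially. (\<integral>\<omega>. (S n \<omega> - Y \<omega>)\<^sup>2 \<partial>M) \<le> T n * T n * B" using realD by auto
    show "(\<lambda>n. T n * T n * B) \<longlonglongrightarrow> 0" using tendsto_mult[OF tendsto_mult[OF Tlim Tlim] tendsto_const[of B]] by simp
  qed simp
  have "integrable M (\<lambda>\<omega>. (Y \<omega>)\<^sup>2)" using integD[of 0] by (simp add: S_def)
  then show ?thesis unfolding conv_qm_def using Ymeas lim unfolding S_def by blast
qed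



lemma abs_mult_le_sq: "\<bar>(a::real) * b\<bar> \<le> a\<^sup>2 + b\<^sup>2"
proof -
  have "0 \<le> (\<bar>a\<bar> - \<bar>b\<bar>)\<^sup>2" by simp
  then have "2 * (\<bar>a\<bar> * \<bar>b\<bar>) \<le> a\<^sup>2 + b\<^sup>2" by (simp add: power2_diff)
  moreover have "0 \<le> \<bar>a\<bar> * \<bar>b\<bar>" by simp
  ultimately show ?thesis unfolding abs_mult by linarith
qed

lemma sq_le_2: "(a::real)\<^sup>2 \<le> 2 * (a - b)\<^sup>2 + 2 * b\<^sup>2"
proof -
  have "0 \<le> (a - 2 * b)\<^sup>2" by simp
  then show ?thesis by (simp add: power2_diff power2_eq_square algebra_simps)
qed

lemma L2_prod:
  fixes f g :: "'a \<Rightarrow> real"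
  assumes [measurable]: "f \<in> borel_measurable M" "g \<in> borel_measurable M"
    and "integrable M (\<lambda>\<omega>. (f \<omega>)\<^sup>2)" "integrable M (\<lambda>\<omega>. (g \<omega>)\<^sup>2)"
  shows "integrable M (\<lambda>\<omega>. f \<omega> * g \<omega>)"
proof (rule Bochner_Integration.integrable_bound[of M "\<lambda>\<omega>. (f \<omega>)\<^sup>2 + (g \<omega>)\<^sup>2"])
  show "integrable M (\<lambda>\<omega>. (f \<omega>)\<^sup>2 + (g \<omega>)\<^sup>2)" using assms by simp
  show "AE \<omega> in M. norm (f \<omega> * g \<omega>) \<le> norm ((f \<omega>)\<^sup>2 + (g \<omega>)\<^sup>2)"
    using abs_mult_le_sq by simp
qed simp

lemma sq_sum_integral:
  fixes f :: "nat \<Rightarrow> 'a \<Rightarrow> real"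
  assumes "\<And>j k. integrable M (\<lambda>\<omega>. f j \<omega> * f k \<omega>)"
  shows "integrable M (\<lambda>\<omega>. (\<Sum>j\<in>A. f j \<omega>)\<^sup>2)"
    "(\<integral>\<omega>. (\<Sum>j\<in>A. f j \<omega>)\<^sup>2 \<partial>M) = (\<Sum>j\<in>A. \<Sum>k\<in>A. \<integral>\<omega>. f j \<omega> * f k \<omega> \<partial>M)"
proof -
  have e: "(\<lambda>\<omega>. (\<Sum>j\<in>A. f j \<omega>)\<^sup>2) = (\<lambda>\<omega>. \<Sum>j\<in>A. \<Sum>k\<in>A. f j \<omega> * f k \<omega>)"
    by (simp add: power2_eq_square sum_product)
  show "integrable M (\<lambda>\<omega>. (\<Sum>j\<in>A. f j \<omega>)\<^sup>2)" unfolding e using assms by auto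
  show "(\<integral>\<omega>. (\<Sum>j\<in>A. f j \<omega>)\<^sup>2 \<partial>M) = (\<Sum>j\<in>A. \<Sum>k\<in>A. \<integral>\<omega>. f j \<omega> * f k \<omega> \<partial>M)"
    unfolding e using assms by (simp add: integral_sum)
qed

lemma L2_diff:
  fixes f g :: "'a \<Rightarrow> real"
  assumes [measurable]: "f \<in> borel_measurable M" "g \<in> borel_measurable M"
    and If: "integrable M (\<lambda>\<omega>. (f \<omega>)\<^sup>2)" and Ig: "integrable M (\<lambda>\<omega>. (g \<omega>)\<^sup>2)"
  shows "integrable M (\<lambda>\<omega>. (f \<omega> - g \<omega>)\<^sup>2)"
    "(\<integral>\<omega>. (f \<omega>)\<^sup>2 \<partial>M) \<le> 2 * (\<integral>\<omega>. (f \<omega> - g \<omega>)\<^sup>2 \<partial>M) + 2 * (\<integral>\<omega>. (g \<omega>)\<^sup>2 \<partial>M)"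
proof -
  have Ifg: "integrable M (\<lambda>\<omega>. f \<omega> * g \<omega>)" using L2_prod[of f M g] If Ig by simp
  have e: "(\<lambda>\<omega>. (f \<omega> - g \<omega>)\<^sup>2) = (\<lambda>\<omega>. (f \<omega>)\<^sup>2 + (g \<omega>)\<^sup>2 - 2 * (f \<omega> * g \<omega>))"
    by (rule ext) (simp add: power2_diff)
  show I: "integrable M (\<lambda>\<omega>. (f \<omega> - g \<omega>)\<^sup>2)" unfolding e using If Ig Ifg by simp
  have "(\<integral>\<omega>. (f \<omega>)\<^sup>2 \<partial>M) \<le> (\<integral>\<omega>. 2 * (f \<omega> - g \<omega>)\<^sup>2 + 2 * (g \<omega>)\<^sup>2 \<partial>M)"
    using I Ig If by (intro integral_mono) (auto intro: sq_le_2)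
  also have "\<dots> = 2 * (\<integral>\<omega>. (f \<omega> - g \<omega>)\<^sup>2 \<partial>M) + 2 * (\<integral>\<omega>. (g \<omega>)\<^sup>2 \<partial>M)"
    using I Ig by simp
  finally show "(\<integral>\<omega>. (f \<omega>)\<^sup>2 \<partial>M) \<le> 2 * (\<integral>\<omega>. (f \<omega> - g \<omega>)\<^sup>2 \<partial>M) + 2 * (\<integral>\<omega>. (g \<omega>)\<^sup>2 \<partial>M)" .
qed



theorem proposition2:
  fixes M :: "'a measure" and p :: nat and d :: "nat \<Rightarrow> real"
    and eps :: "int \<Rightarrow> 'a \<Rightarrow> real" and X :: "int \<Rightarrow> 'a \<Rightarrow> real"
  assumes "prob_space M"
    and "p > 1"
    and d_range: "\<And>i. i \<in> {1..p} \<Longrightarrow> 0 < d i \<and> d i < 1/2"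
    and eps_meas: "\<And>t. eps t \<in> borel_measurable M"
    and eps_L2: "\<And>t. integrable M (\<lambda>\<omega>. (eps t \<omega>)\<^sup>2)"
    and eps_mean: "\<And>t. integrable M (eps t) \<and> (\<integral>\<omega>. eps t \<omega> \<partial>M) = 0"
    and eps_uncorr: "\<And>s t. s \<noteq> t \<Longrightarrow> (\<integral>\<omega>. eps s \<omega> * eps t \<omega> \<partial>M) = 0"
    and eps_periodic: "\<And>t. (\<integral>\<omega>. (eps (t + int p) \<omega>)\<^sup>2 \<partial>M) = (\<integral>\<omega>. (eps t \<omega>)\<^sup>2 \<partial>M)"
    and X_meas: "\<And>t. X t \<in> borel_measurable M"
    and X_L2: "\<And>t. integrable M (\<lambda>\<omega>. (X t \<omega>)\<^sup>2)"
    and X_def: "\<And>i m. i \<in> {1..p} \<Longrightarrow>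
       (\<lambda>n. \<integral>\<omega>. (X (int i + int p * m) \<omega>
            - (\<Sum>j<n. psi_coef (d i) j * eps (int i + int p * m - int j) \<omega>))\<^sup>2 \<partial>M)
       \<longlonglongrightarrow> 0"
  shows "\<forall>i\<in>{1..p}. \<forall>m::int.
           conv_qm M (\<lambda>n \<omega>. \<Sum>j<n. pi_coef (d i) j * X (int i + int p * m - int j) \<omega>)"
proof -
  note [measurable] = eps_meas X_meas
  have prod_int: "integrable M (\<lambda>\<omega>. eps s \<omega> * eps t \<omega>)" for s t
    by (rule L2_prod) (auto simp: eps_L2)
  have per_nat: "(\<integral>\<omega>. (eps (t + int p * int k) \<omega>)\<^sup>2 \<partial>M) = (\<integral>\<omega>. (eps t \<omega>)\<^sup>2 \<partial>M)" for t k
  proof (induction k arbitrary: t)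
    case 0 then show ?case by simp
  next
    case (Suc k)
    have e: "t + int p * int (Suc k) = (t + int p * int k) + int p" by (simp add: algebra_simps)
    show ?case by (simp only: e eps_periodic Suc.IH)
  qed
  have per: "(\<integral>\<omega>. (eps (t + int p * m) \<omega>)\<^sup>2 \<partial>M) = (\<integral>\<omega>. (eps t \<omega>)\<^sup>2 \<partial>M)" for t m
  proof (cases "m \<ge> 0")
    case True
    then show ?thesis using per_nat[of t "nat m"] by simp
  next
    case False
    define k where "k = nat (- m)"
    have m: "m = - int k" using False unfolding k_def by simp
    show ?thesis using per_nat[of "t - int p * int k" k] unfolding m by simp
  qed
  define S where "S i t n \<omega> = (\<Sum>j<n. psi_coef (d i) j * eps (t - int j) \<omega>)" for i t n \<omega>
  have Smeas[measurable]: "S i t n \<in> borel_measurable M" for i t n unfolding S_def by measurable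
  have pint: "integrable M (\<lambda>\<omega>. psi_coef (d i) j * eps (t - int j) \<omega> * (psi_coef (d i) k * eps (t - int k) \<omega>))"
    for i t j k
  proof -
    have "integrable M (\<lambda>\<omega>. (psi_coef (d i) j * psi_coef (d i) k) * (eps (t - int j) \<omega> * eps (t - int k) \<omega>))"
      by (intro integrable_mult_right prod_int)
    moreover have "(\<lambda>\<omega>. (psi_coef (d i) j * psi_coef (d i) k) * (eps (t - int j) \<omega> * eps (t - int k) \<omega>))
       = (\<lambda>\<omega>. psi_coef (d i) j * eps (t - int j) \<omega> * (psi_coef (d i) k * eps (t - int k) \<omega>))"
      by (rule ext) (simp add: algebra_simps)
    ultimately show ?thesis by simp
  qed
  have S_L2: "integrable M (\<lambda>\<omega>. (S i t n \<omega>)\<^sup>2)" for i t n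
    unfolding S_def by (rule sq_sum_integral(1)) (rule pint)
  have S_int: "(\<integral>\<omega>. (S i t n \<omega>)\<^sup>2 \<partial>M) = (\<Sum>j<n. \<Sum>k<n. psi_coef (d i) j * psi_coef (d i) k *
        (\<integral>\<omega>. eps (t - int j) \<omega> * eps (t - int k) \<omega> \<partial>M))" for i t n
  proof -
    have "(\<integral>\<omega>. (S i t n \<omega>)\<^sup>2 \<partial>M) = (\<Sum>j<n. \<Sum>k<n.
        \<integral>\<omega>. psi_coef (d i) j * eps (t - int j) \<omega> * (psi_coef (d i) k * eps (t - int k) \<omega>) \<partial>M)"
      unfolding S_def by (rule sq_sum_integral(2)) (rule pint)
    also have "\<dots> = (\<Sum>j<n. \<Sum>k<n. psi_coef (d i) j * psi_coef (d i) k *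
        (\<integral>\<omega>. eps (t - int j) \<omega> * eps (t - int k) \<omega> \<partial>M))"
    proof (intro sum.cong refl)
      fix j k
      have "(\<lambda>\<omega>. psi_coef (d i) j * eps (t - int j) \<omega> * (psi_coef (d i) k * eps (t - int k) \<omega>))
        = (\<lambda>\<omega>. (psi_coef (d i) j * psi_coef (d i) k) * (eps (t - int j) \<omega> * eps (t - int k) \<omega>))"
        by (rule ext) (simp add: algebra_simps)
      then show "(\<integral>\<omega>. psi_coef (d i) j * eps (t - int j) \<omega> * (psi_coef (d i) k * eps (t - int k) \<omega>) \<partial>M)
        = psi_coef (d i) j * psi_coef (d i) k * (\<integral>\<omega>. eps (t - int j) \<omega> * eps (t - int k) \<omega> \<partial>M)"
        by simp
    qed
    finally show ?thesis .
  qed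
  have S_per: "(\<integral>\<omega>. (S i (t + int p * m) n \<omega>)\<^sup>2 \<partial>M) = (\<integral>\<omega>. (S i t n \<omega>)\<^sup>2 \<partial>M)" for i t m n
    unfolding S_int
  proof (intro sum.cong refl arg_cong2[where f = "(*)"])
    fix j k :: nat
    show "(\<integral>\<omega>. eps (t + int p * m - int j) \<omega> * eps (t + int p * m - int k) \<omega> \<partial>M)
        = (\<integral>\<omega>. eps (t - int j) \<omega> * eps (t - int k) \<omega> \<partial>M)"
    proof (cases "j = k")
      case True
      have e: "t + int p * m - int k = (t - int k) + int p * m" by simp
      show ?thesis unfolding True e using per[of "t - int k" m] by (simp add: power2_eq_square)
    next
      case False
      then show ?thesis using eps_uncorr[of "t + int p * m - int j" "t + int p * m - int k"]
          eps_uncorr[of "t - int j" "t - int k"] by simp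
    qed
  qed
  define V where "V i = (\<integral>\<omega>. (X (int i) \<omega>)\<^sup>2 \<partial>M)" for i
  have bound_i: "(\<integral>\<omega>. (X (int i + int p * m) \<omega>)\<^sup>2 \<partial>M) \<le> 6 + 4 * V i" if i: "i \<in> {1..p}" for i m
  proof -
    have l1: "(\<lambda>n. \<integral>\<omega>. (X (int i + int p * m) \<omega> - S i (int i + int p * m) n \<omega>)\<^sup>2 \<partial>M) \<longlonglongrightarrow> 0"
      using X_def[OF i, of m] unfolding S_def .
    have l0: "(\<lambda>n. \<integral>\<omega>. (X (int i) \<omega> - S i (int i) n \<omega>)\<^sup>2 \<partial>M) \<longlonglongrightarrow> 0"
      using X_def[OF i, of 0] unfolding S_def by simp
    have "eventually (\<lambda>n. (\<integral>\<omega>. (X (int i + int p * m) \<omega> - S i (int i + int p * m) n \<omega>)\<^sup>2 \<partial>M) < 1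
        \<and> (\<integral>\<omega>. (X (int i) \<omega> - S i (int i) n \<omega>)\<^sup>2 \<partial>M) < 1) sequentially"
      using order_tendstoD(2)[OF l1, of 1] order_tendstoD(2)[OF l0, of 1] by (auto intro: eventually_conj)
    then obtain n where n1: "(\<integral>\<omega>. (X (int i + int p * m) \<omega> - S i (int i + int p * m) n \<omega>)\<^sup>2 \<partial>M) < 1"
      and n0: "(\<integral>\<omega>. (X (int i) \<omega> - S i (int i) n \<omega>)\<^sup>2 \<partial>M) < 1"
      unfolding eventually_sequentially by blast
    have a: "(\<integral>\<omega>. (X (int i + int p * m) \<omega>)\<^sup>2 \<partial>M) \<le> 2 * (\<integral>\<omega>. (X (int i + int p * m) \<omega> - S i (int i + int p * m) n \<omega>)\<^sup>2 \<partial>M)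
       + 2 * (\<integral>\<omega>. (S i (int i + int p * m) n \<omega>)\<^sup>2 \<partial>M)"
      by (rule L2_diff(2)) (auto simp: X_L2 S_L2)
    have b: "(\<integral>\<omega>. (S i (int i) n \<omega>)\<^sup>2 \<partial>M) \<le> 2 * (\<integral>\<omega>. (S i (int i) n \<omega> - X (int i) \<omega>)\<^sup>2 \<partial>M)
       + 2 * (\<integral>\<omega>. (X (int i) \<omega>)\<^sup>2 \<partial>M)"
      by (rule L2_diff(2)) (auto simp: X_L2 S_L2)
    have c: "(\<integral>\<omega>. (S i (int i) n \<omega> - X (int i) \<omega>)\<^sup>2 \<partial>M) = (\<integral>\<omega>. (X (int i) \<omega> - S i (int i) n \<omega>)\<^sup>2 \<partial>M)"
      by (simp add: power2_commute)
    have d: "(\<integral>\<omega>. (S i (int i + int p * m) n \<omega>)\<^sup>2 \<partial>M) = (\<integral>\<omega>. (S i (int i) n \<omega>)\<^sup>2 \<partial>M)"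
      by (rule S_per)
    show ?thesis using a b c d n1 n0 unfolding V_def by linarith
  qed
  define B where "B = (\<Sum>i\<in>{1..p}. 6 + 4 * \<bar>V i\<bar>)"
  have bound: "(\<integral>\<omega>. (X t \<omega>)\<^sup>2 \<partial>M) \<le> B" for t
  proof -
    define i where "i = nat ((t - 1) mod int p) + 1"
    define m where "m = (t - 1) div int p"
    have p0: "int p > 0" using \<open>p > 1\<close> by simp
    have r: "0 \<le> (t - 1) mod int p" "(t - 1) mod int p < int p" using p0 by simp_all
    have i: "i \<in> {1..p}" unfolding i_def using r by auto
    have t: "t = int i + int p * m" unfolding i_def m_def using r
      by (simp add: algebra_simps)
    have "(\<integral>\<omega>. (X t \<omega>)\<^sup>2 \<partial>M) \<le> 6 + 4 * V i" unfolding t by (rule bound_i[OF i])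
    also have "\<dots> \<le> 6 + 4 * \<bar>V i\<bar>" by simp
    also have "\<dots> \<le> B" unfolding B_def using i by (intro member_le_sum) auto
    finally show ?thesis .
  qed
  show ?thesis
  proof (intro ballI allI)
    fix i m assume i: "i \<in> {1..p}"
    have "0 < d i" "d i < 1" using d_range[OF i] by auto
    then have "summable (\<lambda>j. \<bar>pi_coef (d i) j\<bar>)" by (rule pi_summable)
    then show "conv_qm M (\<lambda>n \<omega>. \<Sum>j<n. pi_coef (d i) j * X (int i + int p * m - int j) \<omega>)"
      using series_qm[of "\<lambda>j. X (int i + int p * m - int j)" M B "pi_coef (d i)"] X_L2 bound
      by simp
  qed
qed

end
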